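(* Let $\mathfrak M$ be a relational structure with domain $\Sigma$. For every $n\ge1$ and every relation $R\subseteq(\Sigma^* )^n$, $R$ is $MSO(\mathfrak M)$-definable if and only if the relation $\mu(R)=\{(\mu(w_1),\dots,\mu(w_n)):(w_1,\dots,w_n)\in R\}$ admits a reduction sequence with respect to $\mathfrak M_\#$ and $\mathfrak S_{<\omega}$.
   Context: Let $\mathfrak L$ be a relational language and $\mathfrak M$ an $\mathfrak L$-structure with domain $\Sigma$. Let $\#\notin\Sigma$ and let $\mathfrak M_\#$ be the $\mathfrak L_\#=\mathfrak L\cup\{P_\#\}$-structure with domain $\Sigma\cup\{\#\}$, every symbol of $\mathfrak L$ interpreted as in $\mathfrak M$ and $P_\#(x)$ holding iff $x=\#$. $MSO(\mathfrak M)$-definability: for $w=(w_1,\dots,w_n)\in(\Sigma^* )^n$, $\langle w\rangle$ is the word over $(\Sigma\cup\{\#\})^n$ of length $\max_i|w_i|$ obtained by right-padding each $w_i$ with $\#$'s and reading them in parallel; $\pi_j(\langle w\rangle)$ is its $j$-th component and $u[i]$ the $i$-th letter of $u$ (from $0$). To each first-order $\mathfrak L_\#$-formula $F$ with at least one free variable associate a unary predicate $\alpha_F$; $MSO(\mathfrak L)$ is monadic second-order logic over $\{<\}\cup\{\alpha_F\}$. $R$ is $MSO(\mathfrak M)$-definable if there is an $MSO(\mathfrak L)$-sentence $\psi$ such that $w\in R$ iff $\psi$ holds in the structure with domain $D=\{0,\dots,|\langle w\rangle|-1\}$, natural order $<$, and, for each $F$ with $n$ free variables, $\alpha_F(x)$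 true iff $\mathfrak M_\#\models F(\pi_1(\langle w\rangle)[x],\dots,\pi_n(\langle w\rangle)[x])$. Weak power setting: let $W$ be the set of sequences $f:\omega\to\Sigma\cup\{\#\}$ with $f(i)\ne\#$ for only finitely many $i$. For $w\in\Sigma^*$, $\mu(w)\in W$ is the sequence $w\#^\omega$. $\mathfrak S_{<\omega}=(S^+(\omega);\subseteq,\ll)$ where $S^+(\omega)$ is the set of finite subsets of $\omega$, $\subseteq$ is inclusion, and $X\ll Y$ iff $X=\{m\}$, $Y=\{k\}$ with $m<k$. A relation $P\subseteq W^n$ admits a reduction sequence with respect to $\mathfrak M_\#$ and $\mathfrak S_{<\omega}$ if there are a first-order formula $G(X_1,\dots,X_l)$ in the language $\{\subseteq,\ll\}$ and first-order $\mathfrak L_\#$-formulas $\theta_1,\dots,\theta_l$ with $n$ free variables, such that $\mathfrak M_\#\models\neg\theta_i(\#,\dots,\#)$ for every $i$, and for every $(f_1,\dots,f_n)\in W^n$: $(f_1,\dots,f_n)\in P$ iff $\mathfrak S_{<\omega}\models G(T_1,\dots,T_l)$ where $T_i=\{x\in\omega:\mathfrak M_\#\models\theta_i(f_1(x),\dots,f_n(x))\}$. *)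

theory Defs
  imports Main
begin

text \<open>The domain \<Sigma> of the structure M is modelled by a type 's; the extended domain
  \<Sigma> \<union> {#} is 's option, with None playing the role of #.
  A relational language is a type 'r of relation symbols with arities ar :: 'r \<Rightarrow> nat,
  and M interprets each symbol r by the relation I r (on lists of length ar r).\<close>

section \<open>First-order logic over L_# = L \<union> {P_#}, evaluated in M_#\<close>

datatype 'r fo =
    FRel 'r "nat list"
  | FHash nat
  | FEq nat nat
  | FNeg "'r fo"
  | FConj "'r fo" "'r fo"
  | FEx nat "'r fo"

fun fo_sat :: "('r \<Rightarrow> nat) \<Rightarrow> ('r \<Rightarrow> 's list \<Rightarrow> bool) \<Rightarrow> 'r fo \<Rightarrow> (nat \<Rightarrow> 's option) \<Rightarrow> bool" where
  "fo_sat ar I (FRel r vs) e =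
     (length vs = ar r \<and> (\<forall>v\<in>set vs. e v \<noteq> None) \<and> I r (map (\<lambda>v. the (e v)) vs))"
| "fo_sat ar I (FHash v) e = (e v = None)"
| "fo_sat ar I (FEq u v) e = (e u = e v)"
| "fo_sat ar I (FNeg F) e = (\<not> fo_sat ar I F e)"
| "fo_sat ar I (FConj F G) e = (fo_sat ar I F e \<and> fo_sat ar I G e)"
| "fo_sat ar I (FEx v F) e = (\<exists>a. fo_sat ar I F (e(v := a)))"

fun fo_fv :: "'r fo \<Rightarrow> nat set" where
  "fo_fv (FRel r vs) = set vs"
| "fo_fv (FHash v) = {v}"
| "fo_fv (FEq u v) = {u, v}"
| "fo_fv (FNeg F) = fo_fv F"
| "fo_fv (FConj F G) = fo_fv F \<union> fo_fv G"
| "fo_fv (FEx v F) = fo_fv F - {v}"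

definition mu :: "'s list \<Rightarrow> nat \<Rightarrow> 's option" where
  "mu w = (\<lambda>i. if i < length w then Some (w ! i) else None)"

definition conv_len :: "'s list list \<Rightarrow> nat" where
  "conv_len ws = foldr max (map length ws) 0"

text \<open>The letter of <w> at position x, i.e. (pi_1(<w>)[x], ..., pi_n(<w>)[x]),
  as an assignment of the first-order variables 0..n-1; other variables get #.\<close>
definition conv_letter :: "'s list list \<Rightarrow> nat \<Rightarrow> nat \<Rightarrow> 's option" where
  "conv_letter ws x = (\<lambda>j. if j < length ws then mu (ws ! j) x else None)"

datatype 'r mso =
    MLess nat nat
  | MAlpha "'r fo" nat
  | MIn nat nat
  | MNeg "'r mso"
  | MConj "'r mso" "'r mso"
  | MEx1 nat "'r mso"
  | MEx2 nat "'r mso"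

fun mso_sat :: "('r \<Rightarrow> nat) \<Rightarrow> ('r \<Rightarrow> 's list \<Rightarrow> bool) \<Rightarrow> 's list list \<Rightarrow> 'r mso
    \<Rightarrow> (nat \<Rightarrow> nat) \<Rightarrow> (nat \<Rightarrow> nat set) \<Rightarrow> bool" where
  "mso_sat ar I ws (MLess x y) e1 e2 = (e1 x < e1 y)"
| "mso_sat ar I ws (MAlpha F x) e1 e2 = fo_sat ar I F (conv_letter ws (e1 x))"
| "mso_sat ar I ws (MIn x X) e1 e2 = (e1 x \<in> e2 X)"
| "mso_sat ar I ws (MNeg \<phi>) e1 e2 = (\<not> mso_sat ar I ws \<phi> e1 e2)"
| "mso_sat ar I ws (MConj \<phi> \<psi>) e1 e2 = (mso_sat ar I ws \<phi> e1 e2 \<and> mso_sat ar I ws \<psi> e1 e2)"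
| "mso_sat ar I ws (MEx1 x \<phi>) e1 e2 = (\<exists>p < conv_len ws. mso_sat ar I ws \<phi> (e1(x := p)) e2)"
| "mso_sat ar I ws (MEx2 X \<phi>) e1 e2 =
     (\<exists>S \<subseteq> {..<conv_len ws}. mso_sat ar I ws \<phi> e1 (e2(X := S)))"

fun mso_fv1 :: "'r mso \<Rightarrow> nat set" where
  "mso_fv1 (MLess x y) = {x, y}"
| "mso_fv1 (MAlpha F x) = {x}"
| "mso_fv1 (MIn x X) = {x}"
| "mso_fv1 (MNeg \<phi>) = mso_fv1 \<phi>"
| "mso_fv1 (MConj \<phi> \<psi>) = mso_fv1 \<phi> \<union> mso_fv1 \<psi>"
| "mso_fv1 (MEx1 x \<phi>) = mso_fv1 \<phi> - {x}"
| "mso_fv1 (MEx2 X \<phi>) = mso_fv1 \<phi>"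

fun mso_fv2 :: "'r mso \<Rightarrow> nat set" where
  "mso_fv2 (MLess x y) = {}"
| "mso_fv2 (MAlpha F x) = {}"
| "mso_fv2 (MIn x X) = {X}"
| "mso_fv2 (MNeg \<phi>) = mso_fv2 \<phi>"
| "mso_fv2 (MConj \<phi> \<psi>) = mso_fv2 \<phi> \<union> mso_fv2 \<psi>"
| "mso_fv2 (MEx1 x \<phi>) = mso_fv2 \<phi>"
| "mso_fv2 (MEx2 X \<phi>) = mso_fv2 \<phi> - {X}"

fun mso_alphas :: "'r mso \<Rightarrow> 'r fo set" where
  "mso_alphas (MLess x y) = {}"
| "mso_alphas (MAlpha F x) = {F}"
| "mso_alphas (MIn x X) = {}"
| "mso_alphas (MNeg \<phi>) = mso_alphas \<phi>"
| "mso_alphas (MConj \<phi> \<psi>) = mso_alphas \<phi> \<union> mso_alphas \<psi>"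
| "mso_alphas (MEx1 x \<phi>) = mso_alphas \<phi>"
| "mso_alphas (MEx2 X \<phi>) = mso_alphas \<phi>"

definition mso_definable ::
    "('r \<Rightarrow> nat) \<Rightarrow> ('r \<Rightarrow> 's list \<Rightarrow> bool) \<Rightarrow> nat \<Rightarrow> 's list list set \<Rightarrow> bool" where
  "mso_definable ar I n R \<longleftrightarrow>
     (\<exists>\<psi> :: 'r mso. mso_fv1 \<psi> = {} \<and> mso_fv2 \<psi> = {} \<and>
        (\<forall>F\<in>mso_alphas \<psi>. fo_fv F \<noteq> {} \<and> fo_fv F \<subseteq> {..<n}) \<and>
        (\<forall>ws. length ws = n \<longrightarrow> (ws \<in> R \<longleftrightarrow> mso_sat ar I ws \<psi> (\<lambda>_. 0) (\<lambda>_. {}))))"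

section \<open>The weak power setting and S_<omega = (finite subsets of omega; \<subseteq>, <<)\<close>

definition in_W :: "(nat \<Rightarrow> 's option) \<Rightarrow> bool" where
  "in_W f \<longleftrightarrow> finite {i. f i \<noteq> None}"

datatype sfo =
    SSub nat nat
  | SLL nat nat
  | SNeg sfo
  | SConj sfo sfo
  | SEx nat sfo

fun sfo_sat :: "sfo \<Rightarrow> (nat \<Rightarrow> nat set) \<Rightarrow> bool" where
  "sfo_sat (SSub X Y) e = (e X \<subseteq> e Y)"
| "sfo_sat (SLL X Y) e = (\<exists>m k. e X = {m} \<and> e Y = {k} \<and> m < k)"
| "sfo_sat (SNeg G) e = (\<not> sfo_sat G e)"
| "sfo_sat (SConj G H) e = (sfo_sat G e \<and> sfo_sat H e)"
| "sfo_sat (SEx X G) e = (\<exists>S. finite S \<and> sfo_sat G (e(X := S)))"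

fun sfo_fv :: "sfo \<Rightarrow> nat set" where
  "sfo_fv (SSub X Y) = {X, Y}"
| "sfo_fv (SLL X Y) = {X, Y}"
| "sfo_fv (SNeg G) = sfo_fv G"
| "sfo_fv (SConj G H) = sfo_fv G \<union> sfo_fv H"
| "sfo_fv (SEx X G) = sfo_fv G - {X}"

definition admits_reduction_sequence ::
    "('r \<Rightarrow> nat) \<Rightarrow> ('r \<Rightarrow> 's list \<Rightarrow> bool) \<Rightarrow> nat \<Rightarrow> (nat \<Rightarrow> 's option) list set \<Rightarrow> bool" where
  "admits_reduction_sequence ar I n P \<longleftrightarrow>
     (\<exists>(G :: sfo) (\<theta>s :: 'r fo list).
        sfo_fv G \<subseteq> {..<length \<theta>s} \<and>
        (\<forall>\<theta>\<in>set \<theta>s. fo_fv \<theta> \<noteq> {} \<and> fo_fv \<theta> \<subseteq> {..<n} \<and> \<not> fo_sat ar I \<theta> (\<lambda>_. None)) \<and>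
        (\<forall>fs. length fs = n \<longrightarrow> (\<forall>f\<in>set fs. in_W f) \<longrightarrow>
           (fs \<in> P \<longleftrightarrow>
            sfo_sat G (\<lambda>i. if i < length \<theta>s then
                 {x. fo_sat ar I (\<theta>s ! i) (\<lambda>j. if j < n then (fs ! j) x else None)}
               else {}))))"

end

theory Submission
  imports Defs
begin


definition res :: "'a list set \<Rightarrow> 'a list \<Rightarrow> 'a list set" where
  "res L u = {v. u @ v \<in> L}"

definition regular :: "'a list set \<Rightarrow> bool" where
  "regular L \<longleftrightarrow> finite (range (res L))"

lemma reg_by_fun:
  assumes "finite (range h)" and "\<And>u u' v. h u = h u' \<Longrightarrow> (u @ v \<in> L \<longleftrightarrow> u' @ v \<in> L)"
  shows "regular L"
proof -
  define g where "g q = res L (SOME u. h u = q)" for q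
  have "res L u = g (h u)" for u
  proof -
    have "h (SOME u'. h u' = h u) = h u" by (rule someI[of _ u]) simp
    then show ?thesis unfolding g_def res_def using assms(2) by blast
  qed
  then have "range (res L) \<subseteq> g ` range h" by auto
  then show ?thesis unfolding regular_def using assms(1) finite_surj by blast
qed

lemma reg_compl: "regular L \<Longrightarrow> regular (- L)"
  unfolding regular_def
proof -
  assume "finite (range (res L))"
  moreover have "range (res (- L)) = uminus ` range (res L)"
    by (auto simp: res_def)
  ultimately show "finite (range (res (- L)))" by simp
qed

lemma reg_inter: "regular L \<Longrightarrow> regular M \<Longrightarrow> regular (L \<inter> M)"
  unfolding regular_def
proof -
  assume "finite (range (res L))" "finite (range (res M))"
  moreover have "range (res (L \<inter> M)) \<subseteq> (\<lambda>(A,B). A \<inter> B) ` (range (res L) \<times> range (res M))"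
    by (auto simp: res_def image_iff)
  ultimately show "finite (range (res (L \<inter> M)))"
    by (meson finite_SigmaI finite_imageI finite_subset)
qed

definition env :: "nat set list \<Rightarrow> nat \<Rightarrow> nat set" where
  "env u i = {p. p < length u \<and> i \<in> u ! p}"

definition lang :: "sfo \<Rightarrow> nat set list set" where
  "lang G = {u. sfo_sat G (env u)}"

lemma env_append: "env (u @ v) i = env u i \<union> (\<lambda>p. p + length u) ` env v i"
proof (rule set_eqI)
  fix x
  show "x \<in> env (u @ v) i \<longleftrightarrow> x \<in> env u i \<union> (\<lambda>p. p + length u) ` env v i"
  proof (cases "x < length u")
    case True then show ?thesis by (auto simp: env_def nth_append)
  next
    case False
    then obtain q where q: "x = q + length u" by (metis add.commute le_Suc_ex not_less)
    then show ?thesis using False by (auto simp: env_def nth_append)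
  qed
qed

lemma reg_SSub: "regular (lang (SSub X Y))"
proof -
  have L: "lang (SSub X Y) = {u. list_all (\<lambda>a. X \<in> a \<longrightarrow> Y \<in> a) u}"
    by (auto simp: lang_def env_def list_all_length)
  show ?thesis unfolding L
    by (rule reg_by_fun[where h="\<lambda>u. list_all (\<lambda>a. X \<in> a \<longrightarrow> Y \<in> a) u"]) auto
qed

definition cls :: "nat set \<Rightarrow> nat" where
  "cls S = (if S = {} then 0 else if \<exists>m. S = {m} then 1 else 2)"

lemma sus:
  fixes A B :: "nat set"
  assumes "\<forall>p\<in>A. p < c"
  shows "(A \<union> (\<lambda>p. p + c) ` B = {m}) \<longleftrightarrow>
     ((A = {m} \<and> B = {}) \<or> (A = {} \<and> (\<exists>m'. B = {m'} \<and> m = m' + c)))"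
proof
  assume h: "A \<union> (\<lambda>p. p + c) ` B = {m}"
  show "(A = {m} \<and> B = {}) \<or> (A = {} \<and> (\<exists>m'. B = {m'} \<and> m = m' + c))"
  proof (cases "m < c")
    case True
    have "B = {}"
    proof (rule ccontr)
      assume "B \<noteq> {}" then obtain b where "b \<in> B" by blast
      then have "b + c \<in> {m}" using h by blast
      then have "b + c = m" by simp
      then show False using True by linarith
    qed
    then show ?thesis using h by simp
  next
    case False
    have A: "A = {}"
    proof (rule ccontr)
      assume "A \<noteq> {}" then obtain a where "a \<in> A" by blast
      then have "a \<in> {m}" "a < c" using h assms by blast+
      then show False using False by simp
    qed
    then have h2: "(\<lambda>p. p + c) ` B = {m}" using h by simp
    then obtain b where b: "b \<in> B" "m = b + c" by (metis imageE singletonI)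
    have "B = {b}"
    proof
      show "B \<subseteq> {b}"
      proof
        fix x assume "x \<in> B" then have "x + c \<in> {m}" using h2 by blast
        then show "x \<in> {b}" using b by simp
      qed
    qed (use b in simp)
    then show ?thesis using A b by blast
  qed
qed auto

lemma env_lt: "p \<in> env u i \<Longrightarrow> p < length u"
  by (simp add: env_def)

lemma reg_SLL: "regular (lang (SLL X Y))"
proof -
  define L where "L = lang (SLL X Y)"
  have L: "u \<in> L \<longleftrightarrow> (\<exists>m k. env u X = {m} \<and> env u Y = {k} \<and> m < k)" for u
    by (simp add: L_def lang_def)
  define h where "h u = (cls (env u X), cls (env u Y), u \<in> L)" for u
  define \<Phi> where "\<Phi> (q::nat\<times>nat\<times>bool) v = ((snd (snd q) \<and> env v X = {} \<and> env v Y = {}) \<or>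
     (fst q = 1 \<and> fst (snd q) = 0 \<and> env v X = {} \<and> (\<exists>k. env v Y = {k})) \<or>
     (fst q = 0 \<and> fst (snd q) = 0 \<and> v \<in> L))" for q v
  have key: "u @ v \<in> L \<longleftrightarrow> \<Phi> (h u) v" for u v
  proof -
    have b: "\<forall>p\<in>env u i. p < length u" for i using env_lt by blast
    have k1: "env u Y = {k} \<Longrightarrow> k < length u" for k using b[of Y] by auto
    have k0: "env u X = {k} \<Longrightarrow> k < length u" for k using b[of X] by auto
    show ?thesis
      using k0 unfolding L env_append sus[OF b] \<Phi>_def h_def cls_def
      using k1 by (auto simp: L)
  qed
  show ?thesis unfolding L_def[symmetric]
  proof (rule reg_by_fun[where h=h])
    have "range h \<subseteq> {0,1,2} \<times> {0,1,2} \<times> UNIV" by (auto simp: h_def cls_def)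
    then show "finite (range h)" by (rule finite_subset) auto
  qed (simp add: key)
qed



definition rl :: "nat \<Rightarrow> nat set \<Rightarrow> nat set \<Rightarrow> bool" where
  "rl Y a b \<longleftrightarrow> a - {Y} = b - {Y}"

lemma lift_env:
  assumes "list_all2 (rl Y) (u @ replicate k {}) w"
  shows "env w = (env u)(Y := env w Y)"
proof
  fix i
  have len: "length w = length u + k" using assms list_all2_lengthD by fastforce
  show "env w i = ((env u)(Y := env w Y)) i"
  proof (cases "i = Y")
    case False
    have "i \<in> w ! p \<longleftrightarrow> p < length u \<and> i \<in> u ! p" if "p < length w" for p
    proof -
      have "rl Y ((u @ replicate k {}) ! p) (w ! p)"
        using assms that list_all2_nthD2 by blast
      then have "i \<in> w ! p \<longleftrightarrow> i \<in> (u @ replicate k {}) ! p" using False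
        unfolding rl_def by blast
      then show ?thesis using that len by (auto simp: nth_append)
    qed
    then show ?thesis using False len by (auto simp: env_def)
  qed simp
qed

lemma finite_env: "finite (env u i)"
  unfolding env_def by simp

lemma ex_lift:
  "(\<exists>S. finite S \<and> sfo_sat G ((env u)(Y := S))) \<longleftrightarrow>
   (\<exists>k w. list_all2 (rl Y) (u @ replicate k {}) w \<and> sfo_sat G (env w))"
proof
  assume "\<exists>k w. list_all2 (rl Y) (u @ replicate k {}) w \<and> sfo_sat G (env w)"
  then obtain k w where w: "list_all2 (rl Y) (u @ replicate k {}) w" "sfo_sat G (env w)" by blast
  show "\<exists>S. finite S \<and> sfo_sat G ((env u)(Y := S))"
    using w lift_env[OF w(1)] finite_env by metis
next
  assume "\<exists>S. finite S \<and> sfo_sat G ((env u)(Y := S))"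
  then obtain S where S: "finite S" "sfo_sat G ((env u)(Y := S))" by blast
  define len where "len = max (length u) (if S = {} then 0 else Suc (Max S))"
  define k where "k = len - length u"
  define w where "w = map (\<lambda>p. ((u @ replicate k {}) ! p - {Y}) \<union> (if p \<in> S then {Y} else {})) [0..<len]"
  have lw: "length (u @ replicate k {}) = len" by (simp add: k_def len_def)
  have Slt: "p < len" if "p \<in> S" for p
  proof -
    have "p \<le> Max S" using Max_ge[OF S(1) that] .
    moreover have "S \<noteq> {}" using that by blast
    ultimately show ?thesis by (simp add: len_def)
  qed
  have A: "list_all2 (rl Y) (u @ replicate k {}) w"
  proof -
    have lw2: "length u + k = len" using lw by simp
    show ?thesis by (rule list_all2_all_nthI) (auto simp: w_def lw2 rl_def)
  qed
  have "env w = (env u)(Y := env w Y)" by (rule lift_env[OF A])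
  moreover have "env w Y = S" using Slt by (auto simp: env_def w_def split: if_splits)
  ultimately have "env w = (env u)(Y := S)" by simp
  then show "\<exists>k w. list_all2 (rl Y) (u @ replicate k {}) w \<and> sfo_sat G (env w)"
    using A S by metis
qed

lemma reg_SEx:
  assumes "regular (lang G)"
  shows "regular (lang (SEx Y G))"
proof -
  define L where "L = lang G"
  have L': "u \<in> lang (SEx Y G) \<longleftrightarrow> (\<exists>k w. list_all2 (rl Y) (u @ replicate k {}) w \<and> w \<in> L)" for u
    using ex_lift[of G u Y] by (simp add: lang_def L_def)
  define h where "h u = {res L w | w. list_all2 (rl Y) u w}" for u
  have key: "u @ v \<in> lang (SEx Y G) \<longleftrightarrow>
     (\<exists>c\<in>h u. \<exists>k w2. list_all2 (rl Y) (v @ replicate k {}) w2 \<and> w2 \<in> c)" for u v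
  proof
    assume "u @ v \<in> lang (SEx Y G)"
    then obtain k w where w: "list_all2 (rl Y) (u @ (v @ replicate k {})) w" "w \<in> L"
      unfolding L' by auto
    then obtain w1 w2 where "w = w1 @ w2" "list_all2 (rl Y) u w1" "list_all2 (rl Y) (v @ replicate k {}) w2"
      unfolding list_all2_append1 by blast
    then show "\<exists>c\<in>h u. \<exists>k w2. list_all2 (rl Y) (v @ replicate k {}) w2 \<and> w2 \<in> c"
      using w(2) unfolding h_def res_def by blast
  next
    assume "\<exists>c\<in>h u. \<exists>k w2. list_all2 (rl Y) (v @ replicate k {}) w2 \<and> w2 \<in> c"
    then obtain w1 k w2 where "list_all2 (rl Y) u w1" "list_all2 (rl Y) (v @ replicate k {}) w2" "w1 @ w2 \<in> L"
      unfolding h_def res_def by blast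
    moreover have "list_all2 (rl Y) (u @ (v @ replicate k {})) (w1 @ w2)"
      using calculation list_all2_appendI by blast
    ultimately show "u @ v \<in> lang (SEx Y G)" unfolding L' by auto
  qed
  show ?thesis
  proof (rule reg_by_fun[where h=h])
    have "range h \<subseteq> Pow (range (res L))" by (auto simp: h_def)
    then show "finite (range h)" using assms unfolding regular_def L_def
      by (meson finite_Pow_iff finite_subset)
  qed (simp add: key)
qed

lemma reg_lang: "regular (lang G)"
proof (induction G)
  case (SSub x1 x2) then show ?case by (rule reg_SSub)
next
  case (SLL x1 x2) then show ?case by (rule reg_SLL)
next
  case (SNeg G)
  have "lang (SNeg G) = - lang G" by (auto simp: lang_def)
  then show ?case using reg_compl[OF SNeg] by simp
next
  case (SConj G1 G2)
  have "lang (SConj G1 G2) = lang G1 \<inter> lang G2" by (auto simp: lang_def)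
  then show ?case using reg_inter[OF SConj] by simp
next
  case (SEx x1 G) then show ?case by (rule reg_SEx)
qed



definition "fTrue = FEq 0 0"
definition "fFalse = FNeg fTrue"
definition "fOr a b = FNeg (FConj (FNeg a) (FNeg b))"
definition "fconj xs = foldr FConj xs fTrue"
definition "fdisj xs = foldr fOr xs fFalse"

lemma fconj_sat[simp]: "fo_sat ar I (fconj xs) e \<longleftrightarrow> (\<forall>F\<in>set xs. fo_sat ar I F e)"
  by (induction xs) (auto simp: fconj_def fTrue_def)
lemma fdisj_sat[simp]: "fo_sat ar I (fdisj xs) e \<longleftrightarrow> (\<exists>F\<in>set xs. fo_sat ar I F e)"
  by (induction xs) (auto simp: fdisj_def fFalse_def fTrue_def fOr_def)
lemma fconj_fv[simp]: "fo_fv (fconj xs) = {0} \<union> \<Union> (fo_fv ` set xs)"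
  by (induction xs) (auto simp: fconj_def fTrue_def)
lemma fdisj_fv[simp]: "fo_fv (fdisj xs) = {0} \<union> \<Union> (fo_fv ` set xs)"
  by (induction xs) (auto simp: fdisj_def fFalse_def fTrue_def fOr_def)

definition "mTrue = MNeg (MEx1 0 (MLess 0 0))"
definition "mOr a b = MNeg (MConj (MNeg a) (MNeg b))"
definition "mImp a b = MNeg (MConj a (MNeg b))"
definition "mAll1 x a = MNeg (MEx1 x (MNeg a))"
definition "mconj xs = foldr MConj xs mTrue"
definition "mdisj xs = foldr mOr xs (MNeg mTrue)"

lemma mTrue_sat[simp]: "mso_sat ar I ws mTrue e1 e2" by (simp add: mTrue_def)
lemma mOr_sat[simp]: "mso_sat ar I ws (mOr a b) e1 e2 \<longleftrightarrow> mso_sat ar I ws a e1 e2 \<or> mso_sat ar I ws b e1 e2"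
  by (simp add: mOr_def)
lemma mImp_sat[simp]: "mso_sat ar I ws (mImp a b) e1 e2 \<longleftrightarrow> (mso_sat ar I ws a e1 e2 \<longrightarrow> mso_sat ar I ws b e1 e2)"
  by (simp add: mImp_def)
lemma mAll1_sat[simp]: "mso_sat ar I ws (mAll1 x a) e1 e2 \<longleftrightarrow> (\<forall>p < conv_len ws. mso_sat ar I ws a (e1(x := p)) e2)"
  by (simp add: mAll1_def)
lemma mconj_sat[simp]: "mso_sat ar I ws (mconj xs) e1 e2 \<longleftrightarrow> (\<forall>a\<in>set xs. mso_sat ar I ws a e1 e2)"
  by (induction xs) (auto simp: mconj_def)
lemma mdisj_sat[simp]: "mso_sat ar I ws (mdisj xs) e1 e2 \<longleftrightarrow> (\<exists>a\<in>set xs. mso_sat ar I ws a e1 e2)"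
  by (induction xs) (auto simp: mdisj_def)

lemma m_fv1[simp]: "mso_fv1 mTrue = {}" "mso_fv1 (mOr a b) = mso_fv1 a \<union> mso_fv1 b"
  "mso_fv1 (mImp a b) = mso_fv1 a \<union> mso_fv1 b" "mso_fv1 (mAll1 x a) = mso_fv1 a - {x}"
  "mso_fv1 (mconj xs) = \<Union> (mso_fv1 ` set xs)" "mso_fv1 (mdisj xs) = \<Union> (mso_fv1 ` set xs)"
  by (simp_all add: mTrue_def mOr_def mImp_def mAll1_def mconj_def mdisj_def)
     (induction xs; simp add: mTrue_def mOr_def)+
lemma m_fv2[simp]: "mso_fv2 mTrue = {}" "mso_fv2 (mOr a b) = mso_fv2 a \<union> mso_fv2 b"
  "mso_fv2 (mImp a b) = mso_fv2 a \<union> mso_fv2 b" "mso_fv2 (mAll1 x a) = mso_fv2 a"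
  "mso_fv2 (mconj xs) = \<Union> (mso_fv2 ` set xs)" "mso_fv2 (mdisj xs) = \<Union> (mso_fv2 ` set xs)"
  by (simp_all add: mTrue_def mOr_def mImp_def mAll1_def mconj_def mdisj_def)
     (induction xs; simp add: mTrue_def mOr_def)+
lemma m_alphas[simp]: "mso_alphas mTrue = {}" "mso_alphas (mOr a b) = mso_alphas a \<union> mso_alphas b"
  "mso_alphas (mImp a b) = mso_alphas a \<union> mso_alphas b" "mso_alphas (mAll1 x a) = mso_alphas a"
  "mso_alphas (mconj xs) = \<Union> (mso_alphas ` set xs)" "mso_alphas (mdisj xs) = \<Union> (mso_alphas ` set xs)"
  by (simp_all add: mTrue_def mOr_def mImp_def mAll1_def mconj_def mdisj_def)
     (induction xs; simp add: mTrue_def mOr_def)+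

lemma mex2s_sat:
  "mso_sat ar I ws (foldr MEx2 xs a) e1 e2 \<longleftrightarrow>
   (\<exists>e2'. (\<forall>X\<in>set xs. e2' X \<subseteq> {..<conv_len ws}) \<and> (\<forall>X. X \<notin> set xs \<longrightarrow> e2' X = e2 X) \<and>
          mso_sat ar I ws a e1 e2')"
proof (induction xs arbitrary: e2)
  case Nil
  have "(\<forall>X. e2' X = e2 X) \<longleftrightarrow> e2' = e2" for e2' :: "nat \<Rightarrow> nat set" by auto
  then show ?case by auto
next
  case (Cons X xs)
  show ?case
  proof
    assume "mso_sat ar I ws (foldr MEx2 (X # xs) a) e1 e2"
    then obtain S where S: "S \<subseteq> {..<conv_len ws}" "mso_sat ar I ws (foldr MEx2 xs a) e1 (e2(X := S))"
      by auto
    then obtain e2' where e: "\<forall>X\<in>set xs. e2' X \<subseteq> {..<conv_len ws}" "\<forall>Y. Y \<notin> set xs \<longrightarrow> e2' Y = (e2(X := S)) Y"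
      "mso_sat ar I ws a e1 e2'" using Cons.IH[of "e2(X := S)"] by (auto simp del: fun_upd_apply)
    have c1: "\<forall>Y\<in>set (X # xs). e2' Y \<subseteq> {..<conv_len ws}"
    proof
      fix Y assume "Y \<in> set (X # xs)"
      then show "e2' Y \<subseteq> {..<conv_len ws}"
        using e(1) e(2)[rule_format, of Y] S(1) by (cases "Y \<in> set xs") auto
    qed
    have c2: "\<forall>Y. Y \<notin> set (X # xs) \<longrightarrow> e2' Y = e2 Y" using e(2) by auto
    show "\<exists>e2'. (\<forall>Y\<in>set (X # xs). e2' Y \<subseteq> {..<conv_len ws}) \<and> (\<forall>Y. Y \<notin> set (X # xs) \<longrightarrow> e2' Y = e2 Y) \<and>
          mso_sat ar I ws a e1 e2'"
      using c1 c2 e(3) by blast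
  next
    assume "\<exists>e2'. (\<forall>Y\<in>set (X # xs). e2' Y \<subseteq> {..<conv_len ws}) \<and> (\<forall>Y. Y \<notin> set (X # xs) \<longrightarrow> e2' Y = e2 Y) \<and>
          mso_sat ar I ws a e1 e2'"
    then obtain e2' where e: "\<forall>Y\<in>set (X # xs). e2' Y \<subseteq> {..<conv_len ws}" "\<forall>Y. Y \<notin> set (X # xs) \<longrightarrow> e2' Y = e2 Y"
          "mso_sat ar I ws a e1 e2'" by blast
    have "mso_sat ar I ws (foldr MEx2 xs a) e1 (e2(X := e2' X))"
      unfolding Cons.IH
    proof (rule exI[of _ e2'], intro conjI)
      show "\<forall>Y\<in>set xs. e2' Y \<subseteq> {..<conv_len ws}" using e(1) by simp
      show "\<forall>Y. Y \<notin> set xs \<longrightarrow> e2' Y = (e2(X := e2' X)) Y" using e(2) by auto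
    qed (rule e(3))
    then show "mso_sat ar I ws (foldr MEx2 (X # xs) a) e1 e2" using e(1) by auto
  qed
qed

lemma mex2s_fv1[simp]: "mso_fv1 (foldr MEx2 xs a) = mso_fv1 a" by (induction xs) auto
lemma mex2s_fv2[simp]: "mso_fv2 (foldr MEx2 xs a) = mso_fv2 a - set xs" by (induction xs) auto
lemma mex2s_alphas[simp]: "mso_alphas (foldr MEx2 xs a) = mso_alphas a" by (induction xs) auto



lemma conv_len_iff: "x < conv_len ws \<longleftrightarrow> (\<exists>w\<in>set ws. x < length w)"
  by (induction ws) (auto simp: conv_len_def)

lemma conv_letter_beyond: "conv_len ws \<le> x \<Longrightarrow> conv_letter ws x = (\<lambda>_. None)"
proof
  fix j assume x: "conv_len ws \<le> x"
  show "conv_letter ws x j = None"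
  proof (cases "j < length ws")
    case True
    then have "\<not> x < length (ws ! j)" using conv_len_iff[of x ws] x nth_mem by fastforce
    then show ?thesis by (simp add: conv_letter_def mu_def)
  qed (simp add: conv_letter_def)
qed

definition letter :: "('r \<Rightarrow> nat) \<Rightarrow> ('r \<Rightarrow> 's list \<Rightarrow> bool) \<Rightarrow> 'r fo list \<Rightarrow> 's list list \<Rightarrow> nat \<Rightarrow> nat set" where
  "letter ar I ths ws p = {i. i < length ths \<and> fo_sat ar I (ths ! i) (conv_letter ws p)}"

definition word :: "('r \<Rightarrow> nat) \<Rightarrow> ('r \<Rightarrow> 's list \<Rightarrow> bool) \<Rightarrow> 'r fo list \<Rightarrow> 's list list \<Rightarrow> nat set list" where
  "word ar I ths ws = map (letter ar I ths ws) [0..<conv_len ws]"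

definition dl :: "'a list set \<Rightarrow> 'a \<Rightarrow> 'a list set" where
  "dl q a = {v. a # v \<in> q}"

definition letF :: "'r fo list \<Rightarrow> nat set \<Rightarrow> 'r fo" where
  "letF ths A = fconj (map (\<lambda>i. if i \<in> A then ths ! i else FNeg (ths ! i)) [0..<length ths])"

definition stepF :: "'r fo list \<Rightarrow> nat set list set \<Rightarrow> nat set list set \<Rightarrow> 'r fo" where
  "stepF ths q q' = fdisj (map (letF ths) (filter (\<lambda>A. dl q A = q') (map set (subseqs [0..<length ths]))))"

lemma in_subseqs_set: "A \<in> set (map set (subseqs xs)) \<longleftrightarrow> A \<subseteq> set xs"
  using subseqs_powset[of xs] by (metis Pow_iff list.set_map)

lemma letF_sat0:
  "fo_sat ar I (letF ths A) e \<longleftrightarrow> (\<forall>i<length ths. (i \<in> A \<longleftrightarrow> fo_sat ar I (ths ! i) e))"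
proof -
  have "fo_sat ar I (letF ths A) e \<longleftrightarrow>
     (\<forall>i<length ths. fo_sat ar I (if i \<in> A then ths ! i else FNeg (ths ! i)) e)"
  proof -
    have g: "(\<forall>F\<in>set (map f xs). P F) \<longleftrightarrow> (\<forall>x\<in>set xs. P (f x))" for f :: "nat \<Rightarrow> 'r fo" and P xs by simp
    show ?thesis unfolding letF_def fconj_sat g by (auto simp: atLeast0LessThan)
  qed
  also have "\<dots> \<longleftrightarrow> (\<forall>i<length ths. (i \<in> A \<longleftrightarrow> fo_sat ar I (ths ! i) e))"
  proof -
    have "fo_sat ar I (if i \<in> A then ths ! i else FNeg (ths ! i)) e \<longleftrightarrow> (i \<in> A \<longleftrightarrow> fo_sat ar I (ths ! i) e)" for i
      by (cases "i \<in> A") simp_all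
    then show ?thesis by simp
  qed
  finally show ?thesis .
qed

lemma letF_sat:
  assumes "A \<subseteq> {..<length ths}"
  shows "fo_sat ar I (letF ths A) (conv_letter ws p) \<longleftrightarrow> A = letter ar I ths ws p"
  unfolding letF_sat0 letter_def
proof
  assume h: "\<forall>i<length ths. (i \<in> A \<longleftrightarrow> fo_sat ar I (ths ! i) (conv_letter ws p))"
  show "A = {i. i < length ths \<and> fo_sat ar I (ths ! i) (conv_letter ws p)}"
  proof (rule set_eqI)
    fix x show "x \<in> A \<longleftrightarrow> x \<in> {i. i < length ths \<and> fo_sat ar I (ths ! i) (conv_letter ws p)}"
      using h assms by (cases "x < length ths") auto
  qed
qed auto

lemma letter_sub: "letter ar I ths ws p \<subseteq> {..<length ths}"
  by (auto simp: letter_def)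

lemma stepF_sat:
  "fo_sat ar I (stepF ths q q') (conv_letter ws p) \<longleftrightarrow> dl q (letter ar I ths ws p) = q'"
proof -
  have "fo_sat ar I (stepF ths q q') (conv_letter ws p) \<longleftrightarrow>
     (\<exists>A. A \<subseteq> {..<length ths} \<and> dl q A = q' \<and> fo_sat ar I (letF ths A) (conv_letter ws p))"
  proof -
    have e: "(\<exists>F\<in>set (map f xs). P F) \<longleftrightarrow> (\<exists>x\<in>set xs. P (f x))" for f :: "nat set \<Rightarrow> 'r fo" and P xs by simp
    have s: "set [0..<length ths] = {..<length ths}" by (simp add: atLeast0LessThan)
    show ?thesis unfolding stepF_def fdisj_sat e set_filter mem_Collect_eq in_subseqs_set s by blast
  qed
  also have "\<dots> \<longleftrightarrow> dl q (letter ar I ths ws p) = q'"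
  proof
    assume "\<exists>A. A \<subseteq> {..<length ths} \<and> dl q A = q' \<and> fo_sat ar I (letF ths A) (conv_letter ws p)"
    then obtain A where A: "A \<subseteq> {..<length ths}" "dl q A = q'" "fo_sat ar I (letF ths A) (conv_letter ws p)" by blast
    then have "A = letter ar I ths ws p" using letF_sat[OF A(1)] by blast
    then show "dl q (letter ar I ths ws p) = q'" using A(2) by simp
  next
    assume "dl q (letter ar I ths ws p) = q'"
    then show "\<exists>A. A \<subseteq> {..<length ths} \<and> dl q A = q' \<and> fo_sat ar I (letF ths A) (conv_letter ws p)"
    proof (intro exI conjI)
      show "letter ar I ths ws p \<subseteq> {..<length ths}" by (rule letter_sub)
      show "fo_sat ar I (letF ths (letter ar I ths ws p)) (conv_letter ws p)"
        using letF_sat[OF letter_sub] by blast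
    qed simp
  qed
  finally show ?thesis .
qed

lemma stepF_fv: "fo_fv (stepF ths q q') \<subseteq> {0} \<union> \<Union> (fo_fv ` set ths)" "0 \<in> fo_fv (stepF ths q q')"
  by (auto simp: stepF_def letF_def)



definition "Part K = mAll1 0 (MConj (mdisj (map (\<lambda>i. MIn 0 i) [0..<K]))
   (mconj (map (\<lambda>i. mconj (map (\<lambda>j. MNeg (MConj (MIn 0 i) (MIn 0 j))) (filter (\<lambda>j. j \<noteq> i) [0..<K]))) [0..<K])))"
definition "Init ths L qs = mAll1 0 (mImp (MNeg (MEx1 1 (MLess 1 0)))
   (mconj (map (\<lambda>i. mImp (MIn 0 i) (MAlpha (stepF ths L (qs ! i)) 0)) [0..<length qs])))"
definition "Trans ths qs = mAll1 0 (mAll1 1 (mImp (MConj (MLess 0 1) (MNeg (MEx1 2 (MConj (MLess 0 2) (MLess 2 1)))))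
   (mconj (map (\<lambda>i. mconj (map (\<lambda>j. mImp (MConj (MIn 0 i) (MIn 1 j)) (MAlpha (stepF ths (qs ! i) (qs ! j)) 1))
      [0..<length qs])) [0..<length qs]))))"
definition "Acc qs = mAll1 0 (mImp (MNeg (MEx1 1 (MLess 0 1)))
   (mdisj (map (\<lambda>i. MIn 0 i) (filter (\<lambda>i. [] \<in> qs ! i) [0..<length qs]))))"
definition "Run ths L qs = foldr MEx2 [0..<length qs] (mconj [Part (length qs), Init ths L qs, Trans ths qs, Acc qs])"
definition "Psi ths L qs = MConj (Run ths L qs) (if [] \<in> L then mTrue else MEx1 0 mTrue)"

context
  fixes ar :: "'r \<Rightarrow> nat" and I :: "'r \<Rightarrow> 's list \<Rightarrow> bool" and ws :: "'s list list"
begin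

lemma Part_sat: "mso_sat ar I ws (Part K) e1 Q \<longleftrightarrow>
  (\<forall>p<conv_len ws. (\<exists>i<K. p \<in> Q i) \<and> (\<forall>i<K. \<forall>j<K. j \<noteq> i \<longrightarrow> \<not> (p \<in> Q i \<and> p \<in> Q j)))"
  by (simp add: Part_def atLeast0LessThan; blast)

lemma Init_sat: "mso_sat ar I ws (Init ths L qs) e1 Q \<longleftrightarrow>
  (\<forall>p<conv_len ws. (\<forall>q<conv_len ws. \<not> q < p) \<longrightarrow>
     (\<forall>i<length qs. p \<in> Q i \<longrightarrow> dl L (letter ar I ths ws p) = qs ! i))"
  by (simp add: Init_def stepF_sat atLeast0LessThan; blast)

lemma Trans_sat: "mso_sat ar I ws (Trans ths qs) e1 Q \<longleftrightarrow>
  (\<forall>p<conv_len ws. \<forall>p'<conv_len ws. p < p' \<and> (\<forall>r<conv_len ws. \<not> (p < r \<and> r < p')) \<longrightarrow>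
     (\<forall>i<length qs. \<forall>j<length qs. p \<in> Q i \<and> p' \<in> Q j \<longrightarrow> dl (qs ! i) (letter ar I ths ws p') = qs ! j))"
  by (simp add: Trans_def stepF_sat atLeast0LessThan; blast)

lemma Acc_sat: "mso_sat ar I ws (Acc qs) e1 Q \<longleftrightarrow>
  (\<forall>p<conv_len ws. (\<forall>q<conv_len ws. \<not> p < q) \<longrightarrow> (\<exists>i<length qs. [] \<in> qs ! i \<and> p \<in> Q i))"
  by (simp add: Acc_def atLeast0LessThan; blast)

end



lemma res_snoc: "res L (xs @ [a]) = dl (res L xs) a"
  by (auto simp: res_def dl_def)

lemma res_Nil: "res L [] = L" by (simp add: res_def)

context
  fixes ar :: "'r \<Rightarrow> nat" and I :: "'r \<Rightarrow> 's list \<Rightarrow> bool" and ws :: "'s list list"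
    and ths :: "'r fo list" and L :: "nat set list set" and qs :: "nat set list set list"
begin

abbreviation "N \<equiv> conv_len ws"
abbreviation "K \<equiv> length qs"
abbreviation "lt \<equiv> letter ar I ths ws"

definition "PartP Q \<longleftrightarrow> (\<forall>p<N. (\<exists>i<K. p \<in> Q i) \<and> (\<forall>i<K. \<forall>j<K. j \<noteq> i \<longrightarrow> \<not> (p \<in> Q i \<and> p \<in> Q j)))"
definition "InitP Q \<longleftrightarrow> (\<forall>p<N. (\<forall>q<N. \<not> q < p) \<longrightarrow> (\<forall>i<K. p \<in> Q i \<longrightarrow> dl L (lt p) = qs ! i))"
definition "TransP Q \<longleftrightarrow> (\<forall>p<N. \<forall>p'<N. p < p' \<and> (\<forall>r<N. \<not> (p < r \<and> r < p')) \<longrightarrow>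
     (\<forall>i<K. \<forall>j<K. p \<in> Q i \<and> p' \<in> Q j \<longrightarrow> dl (qs ! i) (lt p') = qs ! j))"
definition "AccP Q \<longleftrightarrow> (\<forall>p<N. (\<forall>q<N. \<not> p < q) \<longrightarrow> (\<exists>i<K. [] \<in> qs ! i \<and> p \<in> Q i))"

lemma Run_iff: "mso_sat ar I ws (Run ths L qs) e1 e2 \<longleftrightarrow>
   (\<exists>Q. (\<forall>i<K. Q i \<subseteq> {..<N}) \<and> PartP Q \<and> InitP Q \<and> TransP Q \<and> AccP Q)"
proof
  assume "mso_sat ar I ws (Run ths L qs) e1 e2"
  then obtain e2' where e: "\<forall>X\<in>set [0..<K]. e2' X \<subseteq> {..<N}" and "mso_sat ar I ws (mconj [Part K, Init ths L qs, Trans ths qs, Acc qs]) e1 e2'"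
    unfolding Run_def mex2s_sat by blast
  then have "PartP e2' \<and> InitP e2' \<and> TransP e2' \<and> AccP e2'"
    by (simp only: mconj_sat list.set ball_simps simp_thms Part_sat Init_sat Trans_sat Acc_sat PartP_def InitP_def TransP_def AccP_def)
  moreover have "\<forall>i<K. e2' i \<subseteq> {..<N}" using e by auto
  ultimately show "\<exists>Q. (\<forall>i<K. Q i \<subseteq> {..<N}) \<and> PartP Q \<and> InitP Q \<and> TransP Q \<and> AccP Q" by blast
next
  assume "\<exists>Q. (\<forall>i<K. Q i \<subseteq> {..<N}) \<and> PartP Q \<and> InitP Q \<and> TransP Q \<and> AccP Q"
  then obtain Q where Q: "\<forall>i<K. Q i \<subseteq> {..<N}" "PartP Q" "InitP Q" "TransP Q" "AccP Q" by blast
  define Q' where "Q' X = (if X < K then Q X else e2 X)" for X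
  have ag: "i < K \<Longrightarrow> Q' i = Q i" for i by (simp add: Q'_def)
  have "PartP Q'" using Q(2) unfolding PartP_def using ag by (simp; metis)
  moreover have "InitP Q'" using Q(3) unfolding InitP_def using ag by simp
  moreover have "TransP Q'" using Q(4) unfolding TransP_def using ag by simp
  moreover have "AccP Q'" using Q(5) unfolding AccP_def using ag by metis
  ultimately have "PartP Q'" "InitP Q'" "TransP Q'" "AccP Q'" by blast+
  then have "mso_sat ar I ws (mconj [Part K, Init ths L qs, Trans ths qs, Acc qs]) e1 Q'"
    by (simp only: mconj_sat list.set ball_simps simp_thms Part_sat Init_sat Trans_sat Acc_sat PartP_def InitP_def TransP_def AccP_def)
  moreover have "\<forall>X\<in>set [0..<K]. Q' X \<subseteq> {..<N}" using Q(1) by (simp add: Q'_def)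
  moreover have "\<forall>X. X \<notin> set [0..<K] \<longrightarrow> Q' X = e2 X" by (auto simp: Q'_def)
  ultimately show "mso_sat ar I ws (Run ths L qs) e1 e2"
    unfolding Run_def mex2s_sat by blast
qed

lemma word_len: "length (word ar I ths ws) = N" by (simp add: word_def)
lemma word_nth: "p < N \<Longrightarrow> word ar I ths ws ! p = lt p" by (simp add: word_def)

lemma Psi_sat:
  assumes qs: "set qs = range (res L)" "distinct qs"
  shows "mso_sat ar I ws (Psi ths L qs) e1 e2 \<longleftrightarrow> word ar I ths ws \<in> L"
proof (cases "N = 0")
  case True
  then have u: "word ar I ths ws = []" using word_len by simp
  have "mso_sat ar I ws (Run ths L qs) e1 e2"
    unfolding Run_iff
    by (rule exI[of _ "\<lambda>_. {}"]) (simp add: True PartP_def InitP_def TransP_def AccP_def)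
  then show ?thesis unfolding Psi_def u using True by simp
next
  case False
  define u where "u = word ar I ths ws"
  have lu: "length u = N" by (simp add: u_def word_len)
  have unth: "p < N \<Longrightarrow> u ! p = lt p" for p by (simp add: u_def word_nth)
  define R where "R p = res L (take (Suc p) u)" for p
  have R0: "R 0 = dl L (lt 0)"
  proof -
    have "take (Suc 0) u = [u ! 0]" using False lu by (cases u) auto
    then have "take (Suc 0) u = [lt 0]" using unth False by simp
    then show ?thesis unfolding R_def by (simp add: res_def dl_def)
  qed
  have RS: "Suc p < N \<Longrightarrow> R (Suc p) = dl (R p) (lt (Suc p))" for p
  proof -
    assume a: "Suc p < N"
    have "take (Suc (Suc p)) u = take (Suc p) u @ [u ! Suc p]"
      using a lu take_Suc_conv_app_nth by metis
    then have "take (Suc (Suc p)) u = take (Suc p) u @ [lt (Suc p)]" using unth a by simp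
    then show ?thesis unfolding R_def by (simp add: res_snoc)
  qed
  have Rlast: "R (N - 1) = res L u" using False lu by (simp add: R_def)
  have rin: "\<exists>i<K. qs ! i = R p" for p
  proof -
    have "R p \<in> set qs" using qs(1) by (simp add: R_def)
    then show ?thesis by (metis in_set_conv_nth)
  qed
  have uniq: "i < K \<Longrightarrow> j < K \<Longrightarrow> qs ! i = qs ! j \<Longrightarrow> i = j" for i j
    using qs(2) nth_eq_iff_index_eq by blast
  have "mso_sat ar I ws (Psi ths L qs) e1 e2 \<longleftrightarrow> mso_sat ar I ws (Run ths L qs) e1 e2"
  proof -
    have "\<exists>p. p < N" using False by blast
    then show ?thesis by (simp add: Psi_def)
  qed
  also have "\<dots> \<longleftrightarrow> u \<in> L"
    unfolding Run_iff
  proof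
    assume "\<exists>Q. (\<forall>i<K. Q i \<subseteq> {..<N}) \<and> PartP Q \<and> InitP Q \<and> TransP Q \<and> AccP Q"
    then obtain Q where Q: "PartP Q" "InitP Q" "TransP Q" "AccP Q" by blast
    have claim: "\<forall>i<K. p \<in> Q i \<longrightarrow> qs ! i = R p" if "p < N" for p
      using that
    proof (induction p)
      case 0
      then show ?case using Q(2) unfolding InitP_def R0 by auto
    next
      case (Suc p)
      then have pN: "p < N" by simp
      obtain j where j: "j < K" "p \<in> Q j" using Q(1) pN unfolding PartP_def by blast
      have Rp: "qs ! j = R p" using Suc.IH[OF pN] j by blast
      have nb: "\<forall>r<N. \<not> (p < r \<and> r < Suc p)" by auto
      show ?case
      proof (intro allI impI)
        fix i assume i: "i < K" "Suc p \<in> Q i"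
        have "dl (qs ! j) (lt (Suc p)) = qs ! i"
          using Q(3) pN Suc.prems j i nb unfolding TransP_def by blast
        then show "qs ! i = R (Suc p)" using RS[OF Suc.prems] Rp by simp
      qed
    qed
    have "N - 1 < N" using False by simp
    moreover have "\<forall>q<N. \<not> N - 1 < q" by auto
    ultimately obtain i where "i < K" "[] \<in> qs ! i" "N - 1 \<in> Q i"
      using Q(4) unfolding AccP_def by blast
    then have "[] \<in> R (N - 1)" using claim[OF \<open>N - 1 < N\<close>] by metis
    then show "u \<in> L" unfolding Rlast by (simp add: res_def)
  next
    assume uL: "u \<in> L"
    define Q where "Q i = {p. p < N \<and> R p = qs ! i}" for i
    show "\<exists>Q. (\<forall>i<K. Q i \<subseteq> {..<N}) \<and> PartP Q \<and> InitP Q \<and> TransP Q \<and> AccP Q"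
    proof (rule exI[of _ Q], intro conjI)
      show "\<forall>i<K. Q i \<subseteq> {..<N}" by (auto simp: Q_def)
      show "PartP Q" unfolding PartP_def Q_def using rin uniq by fastforce
      show "InitP Q" unfolding InitP_def Q_def
      proof (intro allI impI)
        fix p i assume a: "p < N" "\<forall>q<N. \<not> q < p" "i < K" "p \<in> {p. p < N \<and> R p = qs ! i}"
        have "p = 0" using a(1,2) False by (metis neq0_conv)
        then show "dl L (lt p) = qs ! i" using a(4) R0 by simp
      qed
      show "TransP Q" unfolding TransP_def Q_def
      proof (intro allI impI)
        fix p p' i j assume a: "p < N" "p' < N" "p < p' \<and> (\<forall>r<N. \<not> (p < r \<and> r < p'))" "i < K" "j < K"
          "p \<in> {p. p < N \<and> R p = qs ! i} \<and> p' \<in> {p. p < N \<and> R p = qs ! j}"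
        have "p' = Suc p"
        proof (rule ccontr)
          assume "p' \<noteq> Suc p"
          then have "p < Suc p \<and> Suc p < p'" using a(3) by auto
          then show False using a(2,3) by (meson less_trans)
        qed
        moreover have "R p = qs ! i" "R p' = qs ! j" using a(6) by auto
        ultimately show "dl (qs ! i) (lt p') = qs ! j" using a(2) RS[of p] by simp
      qed
      show "AccP Q" unfolding AccP_def Q_def
      proof (intro allI impI)
        fix p assume a: "p < N" "\<forall>q<N. \<not> p < q"
        have "p = N - 1" using a(1) a(2)[rule_format, of "N - 1"] False by linarith
        obtain i where i: "i < K" "qs ! i = R p" using rin by blast
        have "[] \<in> R p" using uL unfolding \<open>p = N - 1\<close> Rlast by (simp add: res_def)
        then show "\<exists>i<K. [] \<in> qs ! i \<and> p \<in> {p. p < N \<and> R p = qs ! i}" using i a(1) by auto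
      qed
    qed
  qed
  finally show ?thesis by (simp add: u_def)
qed

end



lemma mu_len: "mu w x = None \<longleftrightarrow> length w \<le> x"
  by (auto simp: mu_def)

lemma mu_inj: "mu a = mu b \<Longrightarrow> a = b"
proof -
  assume h: "mu a = mu b"
  have "length a = length b"
  proof (rule ccontr)
    assume "length a \<noteq> length b"
    then consider "length a < length b" | "length b < length a" by linarith
    then show False
    proof cases
      case 1 then have "mu a (length a) = None" "mu b (length a) \<noteq> None" by (auto simp: mu_def)
      then show False using h by simp
    next
      case 2 then have "mu b (length b) = None" "mu a (length b) \<noteq> None" by (auto simp: mu_def)
      then show False using h by simp
    qed
  qed
  moreover have "\<forall>i<length a. a ! i = b ! i"
  proof (intro allI impI)
    fix i assume "i < length a"
    moreover have "mu a i = mu b i" by (rule fun_cong[OF h])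
    ultimately show "a ! i = b ! i" using \<open>length a = length b\<close> by (simp add: mu_def)
  qed
  ultimately show "a = b" by (simp add: nth_equalityI)
qed

lemma map_mu_inj: "map mu a = map mu b \<Longrightarrow> a = b"
proof -
  assume h: "map mu a = map mu b"
  show "a = b" by (rule map_inj_on[OF h]) (auto intro: mu_inj simp: inj_on_def)
qed

lemma in_W_mu: "in_W (mu w)"
proof -
  have "{i. mu w i \<noteq> None} = {..<length w}" by (auto simp: mu_def)
  then show ?thesis by (simp add: in_W_def)
qed

lemma assign_eq: "length ws = n \<Longrightarrow> (\<lambda>j. if j < n then (map mu ws ! j) x else None) = conv_letter ws x"
  by (auto simp: conv_letter_def)

lemma env_word:
  assumes "\<forall>th\<in>set ths. \<not> fo_sat ar I th (\<lambda>_. None)"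
  shows "env (word ar I ths ws) = (\<lambda>i. if i < length ths then {x. fo_sat ar I (ths ! i) (conv_letter ws x)} else {})"
proof
  fix i
  show "env (word ar I ths ws) i = (if i < length ths then {x. fo_sat ar I (ths ! i) (conv_letter ws x)} else {})"
  proof (cases "i < length ths")
    case True
    have "x < conv_len ws" if sx: "fo_sat ar I (ths ! i) (conv_letter ws x)" for x
    proof (rule ccontr)
      assume "\<not> x < conv_len ws"
      then have "conv_letter ws x = (\<lambda>_. None)" by (simp add: conv_letter_beyond)
      moreover have "ths ! i \<in> set ths" using True by simp
      ultimately show False using assms sx by auto
    qed
    show ?thesis
    proof (simp only: True if_True, rule set_eqI)
      fix x
      show "x \<in> env (word ar I ths ws) i \<longleftrightarrow> x \<in> {x. fo_sat ar I (ths ! i) (conv_letter ws x)}"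
        using True \<open>\<And>x. fo_sat ar I (ths ! i) (conv_letter ws x) \<Longrightarrow> x < conv_len ws\<close>
        unfolding env_def word_def letter_def by auto
    qed
  next
    case False
    then show ?thesis by (auto simp: env_def word_def letter_def)
  qed
qed

lemma fv1_parts: "mso_fv1 (Part k) = {}" "mso_fv1 (Init ths L qs) = {}" "mso_fv1 (Trans ths qs) = {}" "mso_fv1 (Acc qs) = {}"
  by (auto simp: Part_def Init_def Trans_def Acc_def)

lemma fv2_parts: "mso_fv2 (Part k) \<subseteq> {..<k}" "mso_fv2 (Init ths L qs) \<subseteq> {..<length qs}"
   "mso_fv2 (Trans ths qs) \<subseteq> {..<length qs}" "mso_fv2 (Acc qs) \<subseteq> {..<length qs}"
  by (auto simp: Part_def Init_def Trans_def Acc_def)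

lemma al_parts: "mso_alphas (Part k) = {}" "mso_alphas (Acc qs) = {}"
   "mso_alphas (Init ths L qs) \<subseteq> {stepF ths q q' | q q'. True}"
   "mso_alphas (Trans ths qs) \<subseteq> {stepF ths q q' | q q'. True}"
  by (auto simp: Part_def Init_def Trans_def Acc_def)

lemma B_dir:
  assumes n: "n \<ge> 1" and R: "\<forall>w\<in>R. length w = n"
    and ar: "admits_reduction_sequence ar I n ((map mu) ` R)"
  shows "mso_definable ar I n R"
proof -
  obtain G ths where G: "sfo_fv G \<subseteq> {..<length ths}"
    and th: "\<forall>th\<in>set ths. fo_fv th \<noteq> {} \<and> fo_fv th \<subseteq> {..<n} \<and> \<not> fo_sat ar I th (\<lambda>_. None)"
    and iff: "\<forall>fs. length fs = n \<longrightarrow> (\<forall>f\<in>set fs. in_W f) \<longrightarrow>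
           (fs \<in> (map mu) ` R \<longleftrightarrow>
            sfo_sat G (\<lambda>i. if i < length ths then
                 {x. fo_sat ar I (ths ! i) (\<lambda>j. if j < n then (fs ! j) x else None)}
               else {}))"
    using ar unfolding admits_reduction_sequence_def by blast
  define L where "L = lang G"
  have "regular L" unfolding L_def by (rule reg_lang)
  then have "finite (range (res L))" unfolding regular_def .
  from finite_distinct_list[OF this] obtain qs where qs: "set qs = range (res L)" "distinct qs" by blast
  define psi where "psi = Psi ths L qs"
  have sem: "ws \<in> R \<longleftrightarrow> mso_sat ar I ws psi (\<lambda>_. 0) (\<lambda>_. {})" if lw: "length ws = n" for ws
  proof -
    have "mso_sat ar I ws psi (\<lambda>_. 0) (\<lambda>_. {}) \<longleftrightarrow> word ar I ths ws \<in> L"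
      unfolding psi_def by (rule Psi_sat[OF qs])
    also have "\<dots> \<longleftrightarrow> sfo_sat G (\<lambda>i. if i < length ths then {x. fo_sat ar I (ths ! i) (conv_letter ws x)} else {})"
      unfolding L_def lang_def using env_word[of ths ar I ws] th by simp
    also have "\<dots> \<longleftrightarrow> map mu ws \<in> (map mu) ` R"
    proof -
      have W: "\<forall>f\<in>set (map mu ws). in_W f" by (auto simp: in_W_mu)
      have l2: "length (map mu ws) = n" using lw by simp
      have h1: "map mu ws \<in> (map mu) ` R \<longleftrightarrow> sfo_sat G (\<lambda>i. if i < length ths then
                 {x. fo_sat ar I (ths ! i) (\<lambda>j. if j < n then (map mu ws ! j) x else None)} else {})"
        using iff l2 W by blast
      show ?thesis unfolding h1 assign_eq[OF lw] ..
    qed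
    also have "\<dots> \<longleftrightarrow> ws \<in> R" using map_mu_inj by blast
    finally show ?thesis by simp
  qed
  have fv1: "mso_fv1 psi = {}"
    by (simp add: fv1_parts psi_def Psi_def Run_def mTrue_def)
  have fv2: "mso_fv2 psi = {}"
    using fv2_parts(1)[of "length qs"] fv2_parts(2)[of ths L qs] fv2_parts(3)[of ths qs] fv2_parts(4)[of qs] by (auto simp: psi_def Psi_def Run_def mTrue_def)
  have al: "\<forall>F\<in>mso_alphas psi. fo_fv F \<noteq> {} \<and> fo_fv F \<subseteq> {..<n}"
  proof -
    have "fo_fv (stepF ths q q') \<noteq> {} \<and> fo_fv (stepF ths q q') \<subseteq> {..<n}" for q q'
    proof
      show "fo_fv (stepF ths q q') \<noteq> {}" using stepF_fv(2)[of ths q q'] by blast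
      have "\<Union> (fo_fv ` set ths) \<subseteq> {..<n}" using th by blast
      then have "insert 0 (\<Union> (fo_fv ` set ths)) \<subseteq> {..<n}" using n by auto
      with stepF_fv(1)[of ths q q'] show "fo_fv (stepF ths q q') \<subseteq> {..<n}" by blast
    qed
    moreover have "mso_alphas psi \<subseteq> {stepF ths q q' | q q'. True}"
      using al_parts(1)[of "length qs"] al_parts(2)[of qs] al_parts(3)[of ths L qs] al_parts(4)[of ths qs] by (auto simp: psi_def Psi_def Run_def mTrue_def)
    ultimately show ?thesis by blast
  qed
  show ?thesis unfolding mso_definable_def
    using fv1 fv2 al sem by blast
qed



definition "sTrue = SSub 0 0"
definition "sImp a b = SNeg (SConj a (SNeg b))"
definition "sAll X a = SNeg (SEx X (SNeg a))"
definition "sconj xs = foldr SConj xs sTrue"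
definition "Sing v = SEx (Suc v) (SLL v (Suc v))"

lemma s_sat[simp]:
  "sfo_sat sTrue E"
  "sfo_sat (sImp a b) E \<longleftrightarrow> (sfo_sat a E \<longrightarrow> sfo_sat b E)"
  "sfo_sat (sAll X a) E \<longleftrightarrow> (\<forall>S. finite S \<longrightarrow> sfo_sat a (E(X := S)))"
  by (auto simp: sTrue_def sImp_def sAll_def)

lemma sconj_sat[simp]: "sfo_sat (sconj xs) E \<longleftrightarrow> (\<forall>a\<in>set xs. sfo_sat a E)"
  by (induction xs) (auto simp: sconj_def)

lemma s_fv[simp]: "sfo_fv sTrue = {0}" "sfo_fv (sImp a b) = sfo_fv a \<union> sfo_fv b"
  "sfo_fv (sAll X a) = sfo_fv a - {X}" "sfo_fv (sconj xs) = {0} \<union> \<Union> (sfo_fv ` set xs)"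
  by (simp_all add: sTrue_def sImp_def sAll_def Sing_def sconj_def) (induction xs; simp add: sTrue_def)

lemma Sing_fv[simp]: "sfo_fv (Sing v) = {v}"
  by (auto simp: Sing_def)

lemma Sing_sat: "sfo_sat (Sing v) E \<longleftrightarrow> (\<exists>m. E v = {m})"
proof
  assume "sfo_sat (Sing v) E"
  then show "\<exists>m. E v = {m}" by (auto simp: Sing_def)
next
  assume "\<exists>m. E v = {m}"
  then obtain m where m: "E v = {m}" by blast
  have "sfo_sat (SLL v (Suc v)) (E(Suc v := {Suc m}))" using m by simp
  then show "sfo_sat (Sing v) E" unfolding Sing_def sfo_sat.simps by blast
qed

fun tr :: "nat \<Rightarrow> ('r fo \<Rightarrow> nat) \<Rightarrow> 'r mso \<Rightarrow> sfo" where
  "tr b idx (MLess x y) = SLL (b + 2 * x) (b + 2 * y)"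
| "tr b idx (MAlpha F x) = SSub (b + 2 * x) (idx F)"
| "tr b idx (MIn x X) = SSub (b + 2 * x) (b + 2 * X + 1)"
| "tr b idx (MNeg a) = SNeg (tr b idx a)"
| "tr b idx (MConj a c) = SConj (tr b idx a) (tr b idx c)"
| "tr b idx (MEx1 x a) = SEx (b + 2 * x) (SConj (Sing (b + 2 * x)) (SConj (SSub (b + 2 * x) 0) (tr b idx a)))"
| "tr b idx (MEx2 X a) = SEx (b + 2 * X + 1) (SConj (SSub (b + 2 * X + 1) 0) (tr b idx a))"

lemma tr_fv:
  assumes "0 < b" "\<forall>F\<in>mso_alphas a. idx F < b"
  shows "sfo_fv (tr b idx a) \<subseteq> {..<b} \<union> (\<lambda>x. b + 2 * x) ` mso_fv1 a \<union> (\<lambda>X. b + 2 * X + 1) ` mso_fv2 a"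
  using assms
proof (induction a)
  case (MEx1 x a)
  then show ?case by auto
next
  case (MEx2 X a)
  then show ?case by auto
qed auto

lemma tr_sat:
  assumes "0 < b" "E 0 = {..<conv_len ws}"
    "\<forall>F\<in>mso_alphas a. idx F < b \<and> (\<forall>p<conv_len ws. p \<in> E (idx F) \<longleftrightarrow> fo_sat ar I F (conv_letter ws p))"
    "\<forall>x\<in>mso_fv1 a. E (b + 2 * x) = {e1 x} \<and> e1 x < conv_len ws"
    "\<forall>X\<in>mso_fv2 a. E (b + 2 * X + 1) = e2 X \<and> e2 X \<subseteq> {..<conv_len ws}"
  shows "sfo_sat (tr b idx a) E \<longleftrightarrow> mso_sat ar I ws a e1 e2"
  using assms(2-)
proof (induction a arbitrary: E e1 e2)
  case (MLess x y)
  then show ?case by auto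
next
  case (MAlpha F x)
  then show ?case by auto
next
  case (MIn x X)
  then show ?case by auto
next
  case (MNeg a)
  then show ?case by simp
next
  case (MConj a c)
  have "sfo_sat (tr b idx a) E \<longleftrightarrow> mso_sat ar I ws a e1 e2"
    by (rule MConj.IH(1)) (use MConj.prems in auto)
  moreover have "sfo_sat (tr b idx c) E \<longleftrightarrow> mso_sat ar I ws c e1 e2"
    by (rule MConj.IH(2)) (use MConj.prems in auto)
  ultimately show ?case by simp
next
  case (MEx1 x a)
  define v where "v = b + 2 * x"
  have v0: "v \<noteq> 0" using assms(1) by (simp add: v_def)
  have step: "sfo_sat (tr b idx a) (E(v := {p})) \<longleftrightarrow> mso_sat ar I ws a (e1(x := p)) e2" if p: "p < conv_len ws" for p
  proof (rule MEx1.IH)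
    show "(E(v := {p})) 0 = {..<conv_len ws}" using MEx1.prems(1) v0 by simp
    show "\<forall>F\<in>mso_alphas a. idx F < b \<and> (\<forall>q<conv_len ws. q \<in> (E(v := {p})) (idx F) \<longleftrightarrow> fo_sat ar I F (conv_letter ws q))"
    proof
      fix F assume F: "F \<in> mso_alphas a"
      then have "idx F < b" using MEx1.prems(2) by simp
      then have "idx F \<noteq> v" by (simp add: v_def)
      then show "idx F < b \<and> (\<forall>q<conv_len ws. q \<in> (E(v := {p})) (idx F) \<longleftrightarrow> fo_sat ar I F (conv_letter ws q))"
        using MEx1.prems(2) F by simp
    qed
    show "\<forall>y\<in>mso_fv1 a. (E(v := {p})) (b + 2 * y) = {(e1(x := p)) y} \<and> (e1(x := p)) y < conv_len ws"
    proof
      fix y assume y: "y \<in> mso_fv1 a"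
      show "(E(v := {p})) (b + 2 * y) = {(e1(x := p)) y} \<and> (e1(x := p)) y < conv_len ws"
      proof (cases "y = x")
        case True then show ?thesis using p by (simp add: v_def)
      next
        case False
        then have "b + 2 * y \<noteq> v" by (simp add: v_def)
        then show ?thesis using MEx1.prems(3) y False by simp
      qed
    qed
    show "\<forall>X\<in>mso_fv2 a. (E(v := {p})) (b + 2 * X + 1) = e2 X \<and> e2 X \<subseteq> {..<conv_len ws}"
    proof
      fix X assume X: "X \<in> mso_fv2 a"
      have "b + 2 * X + 1 \<noteq> v" unfolding v_def by presburger
      then show "(E(v := {p})) (b + 2 * X + 1) = e2 X \<and> e2 X \<subseteq> {..<conv_len ws}"
        using MEx1.prems(4) X by simp
    qed
  qed
  have "sfo_sat (tr b idx (MEx1 x a)) E \<longleftrightarrow>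
     (\<exists>S. finite S \<and> (\<exists>m. S = {m}) \<and> S \<subseteq> E 0 \<and> sfo_sat (tr b idx a) (E(v := S)))"
    using v0 by (simp add: Sing_sat v_def[symmetric])
  also have "\<dots> \<longleftrightarrow> (\<exists>p<conv_len ws. sfo_sat (tr b idx a) (E(v := {p})))"
    using MEx1.prems(1) by auto
  also have "\<dots> \<longleftrightarrow> (\<exists>p<conv_len ws. mso_sat ar I ws a (e1(x := p)) e2)"
    using step by blast
  finally show ?case by simp
next
  case (MEx2 X a)
  define v where "v = b + 2 * X + 1"
  have v0: "v \<noteq> 0" by (simp add: v_def)
  have step: "sfo_sat (tr b idx a) (E(v := S)) \<longleftrightarrow> mso_sat ar I ws a e1 (e2(X := S))" if S: "S \<subseteq> {..<conv_len ws}" for S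
  proof (rule MEx2.IH)
    show "(E(v := S)) 0 = {..<conv_len ws}" using MEx2.prems(1) v0 by simp
    show "\<forall>F\<in>mso_alphas a. idx F < b \<and> (\<forall>p<conv_len ws. p \<in> (E(v := S)) (idx F) \<longleftrightarrow> fo_sat ar I F (conv_letter ws p))"
    proof
      fix F assume F: "F \<in> mso_alphas a"
      then have "idx F < b" using MEx2.prems(2) by simp
      then have "idx F \<noteq> v" by (simp add: v_def)
      then show "idx F < b \<and> (\<forall>p<conv_len ws. p \<in> (E(v := S)) (idx F) \<longleftrightarrow> fo_sat ar I F (conv_letter ws p))"
        using MEx2.prems(2) F by simp
    qed
    show "\<forall>y\<in>mso_fv1 a. (E(v := S)) (b + 2 * y) = {e1 y} \<and> e1 y < conv_len ws"
    proof
      fix y assume y: "y \<in> mso_fv1 a"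
      have "b + 2 * y \<noteq> v" unfolding v_def by presburger
      then show "(E(v := S)) (b + 2 * y) = {e1 y} \<and> e1 y < conv_len ws" using MEx2.prems(3) y by simp
    qed
    show "\<forall>Y\<in>mso_fv2 a. (E(v := S)) (b + 2 * Y + 1) = (e2(X := S)) Y \<and> (e2(X := S)) Y \<subseteq> {..<conv_len ws}"
    proof
      fix Y assume Y: "Y \<in> mso_fv2 a"
      show "(E(v := S)) (b + 2 * Y + 1) = (e2(X := S)) Y \<and> (e2(X := S)) Y \<subseteq> {..<conv_len ws}"
      proof (cases "Y = X")
        case True then show ?thesis using S by (simp add: v_def)
      next
        case False
        then have "b + 2 * Y + 1 \<noteq> v" by (simp add: v_def)
        then show ?thesis using MEx2.prems(4) Y False by simp
      qed
    qed
  qed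
  have "sfo_sat (tr b idx (MEx2 X a)) E \<longleftrightarrow>
     (\<exists>S. finite S \<and> S \<subseteq> E 0 \<and> sfo_sat (tr b idx a) (E(v := S)))"
    unfolding v_def by simp
  also have "\<dots> \<longleftrightarrow> (\<exists>S\<subseteq>{..<conv_len ws}. sfo_sat (tr b idx a) (E(v := S)))"
    using MEx2.prems(1) by (auto intro: finite_subset)
  also have "\<dots> \<longleftrightarrow> (\<exists>S\<subseteq>{..<conv_len ws}. mso_sat ar I ws a e1 (e2(X := S)))"
    using step by blast
  finally show ?case by simp
qed



definition "Dth n = FNeg (fconj (map FHash [0..<n]))"
definition "thsA n fl = Dth n # map (\<lambda>j. FNeg (FHash j)) [0..<n] @ map (\<lambda>F. FConj F (Dth n)) fl"
definition "WSf n a = sconj (map (\<lambda>j. sAll a (sAll (Suc a)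
   (sImp (SConj (SLL (Suc a) a) (SSub a (Suc j))) (SSub (Suc a) (Suc j))))) [0..<n])"

lemma Dth_sat: "fo_sat ar I (Dth n) e \<longleftrightarrow> (\<exists>j<n. e j \<noteq> None)"
  by (auto simp: Dth_def)

lemma Dth_fv: "0 < n \<Longrightarrow> fo_fv (Dth n) = {..<n}"
  by (auto simp: Dth_def)

lemma finite_alphas: "finite (mso_alphas a)"
  by (induction a) auto

lemma down_closed:
  fixes S :: "nat set"
  assumes "finite S" "\<forall>m k. m < k \<and> k \<in> S \<longrightarrow> m \<in> S"
  shows "\<exists>c. S = {..<c}"
proof (cases "S = {}")
  case True then show ?thesis by (metis lessThan_0)
next
  case False
  have "S = {..<Suc (Max S)}"
  proof
    show "S \<subseteq> {..<Suc (Max S)}" using Max_ge[OF assms(1)] by (auto simp: less_Suc_eq_le)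
    show "{..<Suc (Max S)} \<subseteq> S"
    proof
      fix m assume "m \<in> {..<Suc (Max S)}"
      then have "m \<le> Max S" by simp
      moreover have "Max S \<in> S" using Max_in[OF assms(1) False] .
      ultimately show "m \<in> S"
      proof (cases "m = Max S")
        case False
        then have "m < Max S" using \<open>m \<le> Max S\<close> by simp
        then show ?thesis using assms(2) \<open>Max S \<in> S\<close> by blast
      qed simp
    qed
  qed
  then show ?thesis by blast
qed

lemma WS_sat:
  assumes "n < a"
  shows "sfo_sat (WSf n a) E \<longleftrightarrow> (\<forall>j<n. \<forall>m k. m < k \<and> k \<in> E (Suc j) \<longrightarrow> m \<in> E (Suc j))"
proof -
  have one: "sfo_sat (sAll a (sAll (Suc a) (sImp (SConj (SLL (Suc a) a) (SSub a (Suc j))) (SSub (Suc a) (Suc j))))) E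
      \<longleftrightarrow> (\<forall>m k. m < k \<and> k \<in> E (Suc j) \<longrightarrow> m \<in> E (Suc j))" if j: "j < n" for j
  proof -
    have d: "Suc j \<noteq> a" "Suc j \<noteq> Suc a" using j assms by auto
    show ?thesis
    proof
      assume h: "sfo_sat (sAll a (sAll (Suc a) (sImp (SConj (SLL (Suc a) a) (SSub a (Suc j))) (SSub (Suc a) (Suc j))))) E"
      show "\<forall>m k. m < k \<and> k \<in> E (Suc j) \<longrightarrow> m \<in> E (Suc j)"
      proof (intro allI impI)
        fix m k assume mk: "m < k \<and> k \<in> E (Suc j)"
        define X where "X = sImp (SConj (SLL (Suc a) a) (SSub a (Suc j))) (SSub (Suc a) (Suc j))"
        from h have "\<forall>S. finite S \<longrightarrow> sfo_sat (sAll (Suc a) X) (E(a := S))" by (simp only: s_sat X_def)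
        then have "sfo_sat (sAll (Suc a) X) (E(a := {k}))" by blast
        then have "\<forall>S. finite S \<longrightarrow> sfo_sat X (E(a := {k}, Suc a := S))" by (simp only: s_sat)
        then have "sfo_sat X (E(a := {k}, Suc a := {m}))" by blast
        moreover have "(E(a := {k}, Suc a := {m})) (Suc j) = E (Suc j)" using d by simp
        moreover have "(E(a := {k}, Suc a := {m})) a = {k}" "(E(a := {k}, Suc a := {m})) (Suc a) = {m}" by simp_all
        ultimately show "m \<in> E (Suc j)" using mk unfolding X_def s_sat sfo_sat.simps by auto
      qed
    next
      assume h: "\<forall>m k. m < k \<and> k \<in> E (Suc j) \<longrightarrow> m \<in> E (Suc j)"
      show "sfo_sat (sAll a (sAll (Suc a) (sImp (SConj (SLL (Suc a) a) (SSub a (Suc j))) (SSub (Suc a) (Suc j))))) E"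
        using h d by auto
    qed
  qed
  have g: "(\<forall>x\<in>set (map f xs). P x) \<longleftrightarrow> (\<forall>y\<in>set xs. P (f y))" for f :: "nat \<Rightarrow> sfo" and P xs by simp
  have A: "(\<forall>j\<in>set [0..<n]. P j) \<longleftrightarrow> (\<forall>j<n. P j)" for P by auto
  show ?thesis unfolding WSf_def sconj_sat g A using one by blast
qed

lemma WS_fv: "n \<le> a \<Longrightarrow> sfo_fv (WSf n a) \<subseteq> {..<Suc a}"
  by (auto simp: WSf_def)

lemma wordshape:
  assumes "\<forall>f\<in>set fs. in_W f"
  shows "(\<forall>j<length fs. \<forall>m k. m < k \<and> (fs ! j) k \<noteq> None \<longrightarrow> (fs ! j) m \<noteq> None) \<longleftrightarrow> (\<exists>ws. fs = map mu ws)"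
proof
  assume h: "\<forall>j<length fs. \<forall>m k. m < k \<and> (fs ! j) k \<noteq> None \<longrightarrow> (fs ! j) m \<noteq> None"
  have "\<exists>w. fs ! j = mu w" if j: "j < length fs" for j
  proof -
    have fin: "finite {x. (fs ! j) x \<noteq> None}" using assms j nth_mem unfolding in_W_def by blast
    have dc: "\<forall>m k. m < k \<and> k \<in> {x. (fs ! j) x \<noteq> None} \<longrightarrow> m \<in> {x. (fs ! j) x \<noteq> None}"
      using h j by simp
    obtain c where c: "{x. (fs ! j) x \<noteq> None} = {..<c}"
      using down_closed[OF fin dc] by blast
    define w where "w = map (\<lambda>x. the ((fs ! j) x)) [0..<c]"
    have "fs ! j = mu w"
    proof
      fix x show "(fs ! j) x = mu w x"
      proof (cases "x < c")
        case True
        then have "(fs ! j) x \<noteq> None" using c by blast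
        then show ?thesis using True by (auto simp: mu_def w_def)
      next
        case False
        then have "(fs ! j) x = None" using c by blast
        then show ?thesis using False by (simp add: mu_def w_def)
      qed
    qed
    then show ?thesis by blast
  qed
  then have "\<forall>j<length fs. \<exists>w. fs ! j = mu w" by blast
  then obtain g where g: "\<forall>j<length fs. fs ! j = mu (g j)" by metis
  have "fs = map mu (map g [0..<length fs])"
    by (rule nth_equalityI) (simp_all add: g)
  then show "\<exists>ws. fs = map mu ws" by blast
next
  assume "\<exists>ws. fs = map mu ws"
  then obtain ws where "fs = map mu ws" by blast
  then show "\<forall>j<length fs. \<forall>m k. m < k \<and> (fs ! j) k \<noteq> None \<longrightarrow> (fs ! j) m \<noteq> None"
    by (auto simp: mu_def)
qed



lemma WS_fv2: "sfo_fv (WSf n a) \<subseteq> {..<Suc n}"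
  by (auto simp: WSf_def)

lemma A_dir:
  fixes ar :: "'r \<Rightarrow> nat" and I :: "'r \<Rightarrow> 's list \<Rightarrow> bool" and R :: "'s list list set"
  assumes n: "n \<ge> 1" and R: "\<forall>w\<in>R. length w = n" and md: "mso_definable ar I n R"
  shows "admits_reduction_sequence ar I n ((map mu) ` R)"
proof -
  obtain psi :: "'r mso" where p1: "mso_fv1 psi = {}" and p2: "mso_fv2 psi = {}"
    and pal: "\<forall>F\<in>mso_alphas psi. fo_fv F \<noteq> {} \<and> fo_fv F \<subseteq> {..<n}"
    and psem: "\<forall>ws. length ws = n \<longrightarrow> (ws \<in> R \<longleftrightarrow> mso_sat ar I ws psi (\<lambda>_. 0) (\<lambda>_. {}))"
    using md unfolding mso_definable_def by blast
  obtain fl where fl: "set fl = mso_alphas psi" using finite_list[OF finite_alphas] by blast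
  define ths where "ths = thsA n fl"
  have lth: "length ths = Suc (n + length fl)" by (simp add: ths_def thsA_def)
  define ix where "ix F = (SOME i. i < length fl \<and> fl ! i = F)" for F
  have ix: "ix F < length fl \<and> fl ! ix F = F" if F: "F \<in> mso_alphas psi" for F
  proof -
    have "\<exists>i. i < length fl \<and> fl ! i = F" using F fl by (metis in_set_conv_nth)
    then show ?thesis unfolding ix_def by (rule someI_ex)
  qed
  define idx where "idx F = Suc (n + ix F)" for F
  have th0: "ths ! 0 = Dth n" by (simp add: ths_def thsA_def)
  have thj: "ths ! Suc j = FNeg (FHash j)" if "j < n" for j
    using that by (simp add: ths_def thsA_def nth_append)
  have thF: "ths ! Suc (n + i) = FConj (fl ! i) (Dth n)" if "i < length fl" for i
    using that by (simp add: ths_def thsA_def nth_append)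
  have idxl: "idx F < length ths" if "F \<in> mso_alphas psi" for F
    using ix[OF that] lth by (simp add: idx_def)
  have thidx: "ths ! idx F = FConj F (Dth n)" if "F \<in> mso_alphas psi" for F
    using ix[OF that] thF unfolding idx_def by simp
  define G where "G = SConj (WSf n (length ths)) (tr (length ths) idx psi)"
  have n0: "0 < n" using n by simp
  show ?thesis unfolding admits_reduction_sequence_def
  proof (intro exI[of _ G] exI[of _ ths] conjI)
    have "sfo_fv (tr (length ths) idx psi) \<subseteq> {..<length ths}"
      using tr_fv[of "length ths" psi idx] idxl p1 p2 lth by simp
    moreover have "sfo_fv (WSf n (length ths)) \<subseteq> {..<length ths}"
      using WS_fv2[of n "length ths"] lth by auto
    ultimately show "sfo_fv G \<subseteq> {..<length ths}" by (simp add: G_def)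
  next
    have Dok: "fo_fv (Dth n :: 'r fo) \<noteq> {} \<and> fo_fv (Dth n :: 'r fo) \<subseteq> {..<n} \<and> \<not> fo_sat ar I (Dth n) (\<lambda>_. None)"
    proof -
      have a: "fo_fv (Dth n :: 'r fo) = {..<n}" by (rule Dth_fv[OF n0])
      have b: "\<not> fo_sat ar I (Dth n) (\<lambda>_. None)" by (simp add: Dth_sat)
      have c: "{..<n} \<noteq> {}" using n0 by auto
      show ?thesis unfolding a using b c by simp
    qed
    show "\<forall>th\<in>set ths. fo_fv th \<noteq> {} \<and> fo_fv th \<subseteq> {..<n} \<and> \<not> fo_sat ar I th (\<lambda>_. None)"
    proof
      fix th assume "th \<in> set ths"
      then have "th = Dth n \<or> (\<exists>j<n. th = FNeg (FHash j)) \<or> (\<exists>F\<in>set fl. th = FConj F (Dth n))"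
        by (auto simp: ths_def thsA_def)
      then show "fo_fv th \<noteq> {} \<and> fo_fv th \<subseteq> {..<n} \<and> \<not> fo_sat ar I th (\<lambda>_. None)"
      proof (elim disjE exE bexE conjE)
        assume "th = Dth n" then show ?thesis using Dok by simp
      next
        fix j assume "j < n" "th = FNeg (FHash j)" then show ?thesis by simp
      next
        fix F assume F: "F \<in> set fl" "th = FConj F (Dth n)"
        have "fo_fv F \<noteq> {} \<and> fo_fv F \<subseteq> {..<n}" using pal F(1) fl by blast
        then show ?thesis using Dok F(2) by simp
      qed
    qed
  next
    show "\<forall>fs. length fs = n \<longrightarrow> (\<forall>f\<in>set fs. in_W f) \<longrightarrow>
           (fs \<in> (map mu) ` R \<longleftrightarrow>
            sfo_sat G (\<lambda>i. if i < length ths then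
                 {x. fo_sat ar I (ths ! i) (\<lambda>j. if j < n then (fs ! j) x else None)}
               else {}))"
    proof (intro allI impI)
      fix fs :: "(nat \<Rightarrow> 's option) list"
      assume lf: "length fs = n" and W: "\<forall>f\<in>set fs. in_W f"
      define E where "E = (\<lambda>i. if i < length ths then
                 {x. fo_sat ar I (ths ! i) (\<lambda>j. if j < n then (fs ! j) x else None)} else {})"
      have Ej: "E (Suc j) = {x. (fs ! j) x \<noteq> None}" if "j < n" for j
        using that thj[OF that] lth by (auto simp: E_def)
      have WS: "sfo_sat (WSf n (length ths)) E \<longleftrightarrow> (\<exists>ws. fs = map mu ws)"
      proof -
        have "sfo_sat (WSf n (length ths)) E \<longleftrightarrow> (\<forall>j<n. \<forall>m k. m < k \<and> k \<in> E (Suc j) \<longrightarrow> m \<in> E (Suc j))"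
          by (rule WS_sat) (simp add: lth)
        also have "\<dots> \<longleftrightarrow> (\<forall>j<length fs. \<forall>m k. m < k \<and> (fs ! j) k \<noteq> None \<longrightarrow> (fs ! j) m \<noteq> None)"
          using Ej lf by simp
        also have "\<dots> \<longleftrightarrow> (\<exists>ws. fs = map mu ws)" by (rule wordshape[OF W])
        finally show ?thesis .
      qed
      have "fs \<in> (map mu) ` R \<longleftrightarrow> sfo_sat G E"
      proof (cases "\<exists>ws. fs = map mu ws")
        case False
        then have "fs \<notin> (map mu) ` R" by blast
        moreover have "\<not> sfo_sat G E" using False WS by (simp add: G_def)
        ultimately show ?thesis by blast
      next
        case True
        then obtain ws where ws: "fs = map mu ws" by blast
        have lw: "length ws = n" using ws lf by simp
        have asg: "(\<lambda>j. if j < n then (fs ! j) x else None) = conv_letter ws x" for x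
          unfolding ws by (rule assign_eq[OF lw])
        have E0: "E 0 = {..<conv_len ws}"
        proof -
          have "E 0 = {x. \<exists>j<n. conv_letter ws x j \<noteq> None}"
            using th0 lth by (simp add: E_def Dth_sat asg)
          also have "\<dots> = {x. \<exists>j<n. x < length (ws ! j)}"
            by (auto simp: conv_letter_def mu_def lw)
          also have "\<dots> = {..<conv_len ws}"
            using conv_len_iff[of _ ws] lw by (auto simp: in_set_conv_nth) (metis nth_mem)+
          finally show ?thesis .
        qed
        have D: "fo_sat ar I (Dth n) (conv_letter ws p) \<longleftrightarrow> p < conv_len ws" for p
        proof -
          have "p \<in> E 0 \<longleftrightarrow> fo_sat ar I (Dth n) (conv_letter ws p)"
            using th0 lth by (simp add: E_def asg)
          then show ?thesis using E0 by simp
        qed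
        have trs: "sfo_sat (tr (length ths) idx psi) E \<longleftrightarrow> mso_sat ar I ws psi (\<lambda>_. 0) (\<lambda>_. {})"
        proof (rule tr_sat)
          show "0 < length ths" using lth by simp
          show "E 0 = {..<conv_len ws}" by (rule E0)
          show "\<forall>F\<in>mso_alphas psi. idx F < length ths \<and>
             (\<forall>p<conv_len ws. p \<in> E (idx F) \<longleftrightarrow> fo_sat ar I F (conv_letter ws p))"
          proof
            fix F assume F: "F \<in> mso_alphas psi"
            have "p \<in> E (idx F) \<longleftrightarrow> fo_sat ar I F (conv_letter ws p)" if p: "p < conv_len ws" for p
              using idxl[OF F] thidx[OF F] D[of p] p by (simp add: E_def asg)
            then show "idx F < length ths \<and>
             (\<forall>p<conv_len ws. p \<in> E (idx F) \<longleftrightarrow> fo_sat ar I F (conv_letter ws p))"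
              using idxl[OF F] by blast
          qed
        qed (simp_all add: p1 p2)
        have "fs \<in> (map mu) ` R \<longleftrightarrow> ws \<in> R" using ws map_mu_inj by blast
        also have "\<dots> \<longleftrightarrow> mso_sat ar I ws psi (\<lambda>_. 0) (\<lambda>_. {})" using psem lw by blast
        also have "\<dots> \<longleftrightarrow> sfo_sat G E" using trs WS True by (simp add: G_def)
        finally show ?thesis .
      qed
      then show "fs \<in> (map mu) ` R \<longleftrightarrow>
            sfo_sat G (\<lambda>i. if i < length ths then
                 {x. fo_sat ar I (ths ! i) (\<lambda>j. if j < n then (fs ! j) x else None)}
               else {})" unfolding E_def .
    qed
  qed
qed

theorem proposition4p9:
  fixes ar :: "'r \<Rightarrow> nat" and I :: "'r \<Rightarrow> 's list \<Rightarrow> bool"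
    and n :: nat and R :: "'s list list set"
  assumes "n \<ge> 1"
    and "\<forall>w\<in>R. length w = n"
  shows "mso_definable ar I n R \<longleftrightarrow> admits_reduction_sequence ar I n ((map mu) ` R)"
  using A_dir[OF assms] B_dir[OF assms] by blast

end
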